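(* An element $\bar b\in\mathcal B$ satisfies $W\bar b+\tilde P\bar b\ni0$ in $C(\mathcal X)$ if and only if $B^{-1}(\bar b)$ is supported on $\arg\min_{\mathcal X}V$.
   Context: $(\mathcal X,\mathsf d)$ compact metric space; $\varepsilon>0$; $c\in C(\mathcal X\times\mathcal X)$ symmetric, nonnegative, with $k_c:=\exp(-c/\varepsilon)$ a positive definite universal kernel, RKHS $\mathcal H_c$, Riesz map $H_c$ ($H_c[\sigma](y)=\int k_c(x,y)d\sigma(x)$ on measures; $H_c^{-1}$ on $H_c[\mathcal M(\mathcal X)]$ returns the measure); $V\in C(\mathcal X)$. $\mathcal B:=H_c[\mathcal M_+(\mathcal X)]\cap\{\|b\|_{\mathcal H_c}=1\}$; $B^{-1}(b):=b\,H_c^{-1}[b]$ (a probability measure, inverse of the embedding $B(\mu)=\exp(-f_\mu/\varepsilon)$, with $b>0$ on $\mathcal X$). For $b\in H_c[\mathcal M(\mathcal X)]$: $Vb$ pointwise product, $V^*b:=H_c[VH_c^{-1}[b]]$, $W:=\frac2\varepsilon(V-V^* )$; for $b\in H_c[\mathcal M_+(\mathcal X)]$: $\tilde Pb:=\{p\in C(\mathcal X):p\le0,\ p=0\text{ on }\operatorname{supp}H_c^{-1}[b]\}$. *)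

theory Defs
  imports "HOL-Probability.Probability"
begin

text \<open>The compact metric space X is the universe of a metric_space type 'a.
  Measures on X are finite Borel measures (positive), i.e. elements of M_+(X).\<close>

definition kc :: "real \<Rightarrow> ('a \<Rightarrow> 'a \<Rightarrow> real) \<Rightarrow> 'a \<Rightarrow> 'a \<Rightarrow> real" where
  "kc eps c = (\<lambda>x y. exp (- c x y / eps))"

definition pd_kernel :: "('a \<Rightarrow> 'a \<Rightarrow> real) \<Rightarrow> bool" where
  "pd_kernel k \<longleftrightarrow> (\<forall>x y. k x y = k y x) \<and>
     (\<forall>(n::nat) (xs::nat \<Rightarrow> 'a) (a::nat \<Rightarrow> real).
        (\<Sum>i<n. \<Sum>j<n. a i * a j * k (xs i) (xs j)) \<ge> 0)"

text \<open>Universal kernel: the RKHS is dense in C(X) w.r.t. the sup norm; equivalently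
  the span of the kernel sections k(x,.) is uniformly dense in C(X).\<close>
definition universal_kernel :: "('a::topological_space \<Rightarrow> 'a \<Rightarrow> real) \<Rightarrow> bool" where
  "universal_kernel k \<longleftrightarrow>
     (\<forall>f. continuous_on UNIV f \<longrightarrow> (\<forall>e>0. \<exists>(n::nat) (xs::nat \<Rightarrow> 'a) (a::nat \<Rightarrow> real).
        \<forall>y. \<bar>f y - (\<Sum>i<n. a i * k (xs i) y)\<bar> < e))"

definition Mplus :: "'a::topological_space measure set" where
  "Mplus = {\<sigma>. sets \<sigma> = sets borel \<and> finite_measure \<sigma>}"

definition kembed :: "('a \<Rightarrow> 'a \<Rightarrow> real) \<Rightarrow> 'a measure \<Rightarrow> 'a \<Rightarrow> real" where
  "kembed k \<sigma> = (\<lambda>y. \<integral>x. k x y \<partial>\<sigma>)"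

definition rkhs_norm_sq :: "('a \<Rightarrow> 'a \<Rightarrow> real) \<Rightarrow> 'a measure \<Rightarrow> real" where
  "rkhs_norm_sq k \<sigma> = (\<integral>y. (\<integral>x. k x y \<partial>\<sigma>) \<partial>\<sigma>)"

definition Bset :: "('a::topological_space \<Rightarrow> 'a \<Rightarrow> real) \<Rightarrow> ('a \<Rightarrow> real) set" where
  "Bset k = {b. \<exists>\<sigma>\<in>Mplus. b = kembed k \<sigma> \<and> sqrt (rkhs_norm_sq k \<sigma>) = 1}"

definition Hinv :: "('a::topological_space \<Rightarrow> 'a \<Rightarrow> real) \<Rightarrow> ('a \<Rightarrow> real) \<Rightarrow> 'a measure" where
  "Hinv k b = (THE \<sigma>. \<sigma> \<in> Mplus \<and> kembed k \<sigma> = b)"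

definition Binv :: "('a::topological_space \<Rightarrow> 'a \<Rightarrow> real) \<Rightarrow> ('a \<Rightarrow> real) \<Rightarrow> 'a measure" where
  "Binv k b = density (Hinv k b) (\<lambda>x. ennreal (b x))"

definition Vstar :: "('a::topological_space \<Rightarrow> 'a \<Rightarrow> real) \<Rightarrow> ('a \<Rightarrow> real) \<Rightarrow> ('a \<Rightarrow> real) \<Rightarrow> 'a \<Rightarrow> real" where
  "Vstar k V b = (\<lambda>y. \<integral>x. k x y * V x \<partial>(Hinv k b))"

definition Wop :: "real \<Rightarrow> ('a::topological_space \<Rightarrow> 'a \<Rightarrow> real) \<Rightarrow> ('a \<Rightarrow> real) \<Rightarrow> ('a \<Rightarrow> real) \<Rightarrow> 'a \<Rightarrow> real" where
  "Wop eps k V b = (\<lambda>y. 2 / eps * (V y * b y - Vstar k V b y))"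

definition msupp :: "'a::metric_space measure \<Rightarrow> 'a set" where
  "msupp \<sigma> = {x. \<forall>e>0. emeasure \<sigma> (ball x e) > 0}"

definition Ptilde :: "('a::metric_space \<Rightarrow> 'a \<Rightarrow> real) \<Rightarrow> ('a \<Rightarrow> real) \<Rightarrow> ('a \<Rightarrow> real) set" where
  "Ptilde k b = {p. continuous_on UNIV p \<and> (\<forall>x. p x \<le> 0) \<and> (\<forall>x\<in>msupp (Hinv k b). p x = 0)}"

definition argmin_set :: "('a \<Rightarrow> real) \<Rightarrow> 'a set" where
  "argmin_set V = {x. \<forall>y. V x \<le> V y}"

end

theory Submission
  imports Defs
begin


lemma Mplus_fin: "\<sigma> \<in> Mplus \<Longrightarrow> finite_measure \<sigma>"
  by (simp add: Mplus_def)

lemma Mplus_sets: "\<sigma> \<in> Mplus \<Longrightarrow> sets \<sigma> = sets borel"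
  by (simp add: Mplus_def)

lemma Mplus_space: "\<sigma> \<in> Mplus \<Longrightarrow> space \<sigma> = UNIV"
  using sets_eq_imp_space_eq[OF Mplus_sets] by simp

lemma Mplus_meas:
  assumes "\<sigma> \<in> Mplus" "continuous_on UNIV (g::'a::metric_space \<Rightarrow> real)"
  shows "g \<in> borel_measurable \<sigma>"
proof -
  have "g \<in> borel_measurable borel"
    using assms(2) by (simp add: borel_measurable_continuous_onI)
  then show ?thesis using measurable_cong_sets[OF Mplus_sets[OF assms(1)] refl, of borel] by blast
qed

lemma cont_bounded:
  assumes "compact (UNIV::'a::metric_space set)" "continuous_on UNIV (g::'a \<Rightarrow> real)"
  obtains B where "\<And>x. \<bar>g x\<bar> \<le> B"
proof -
  have "compact (range g)" using assms compact_continuous_image by blast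
  then have "bounded (range g)" by (rule compact_imp_bounded)
  then obtain B where "\<forall>y\<in>range g. norm y \<le> B" by (auto simp: bounded_iff)
  then show ?thesis using that by auto
qed

lemma Mplus_int:
  assumes "compact (UNIV::'a::metric_space set)" "\<sigma> \<in> Mplus" "continuous_on UNIV (g::'a \<Rightarrow> real)"
  shows "integrable \<sigma> g"
proof -
  interpret finite_measure \<sigma> using Mplus_fin[OF assms(2)] .
  obtain B where "\<And>x. \<bar>g x\<bar> \<le> B" using cont_bounded assms(1,3) by blast
  then show ?thesis
    by (intro integrable_const_bound[where B=B] Mplus_meas assms) auto
qed

lemma Mplus_int_bound:
  assumes "compact (UNIV::'a::metric_space set)" "\<sigma> \<in> Mplus" "continuous_on UNIV (g::'a \<Rightarrow> real)"
    and "\<And>y. \<bar>g y\<bar> \<le> e"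
  shows "\<bar>\<integral>x. g x \<partial>\<sigma>\<bar> \<le> e * measure \<sigma> UNIV"
proof -
  interpret finite_measure \<sigma> using Mplus_fin[OF assms(2)] .
  have "\<bar>\<integral>x. g x \<partial>\<sigma>\<bar> \<le> (\<integral>x. \<bar>g x\<bar> \<partial>\<sigma>)"
    by (rule integral_abs_bound)
  also have "\<dots> \<le> (\<integral>x. e \<partial>\<sigma>)"
    by (intro integral_mono Mplus_int assms continuous_on_rabs) (auto simp: assms(4))
  also have "\<dots> = e * measure \<sigma> UNIV" using Mplus_space[OF assms(2)] by simp
  finally show ?thesis .
qed

lemma cont_fst: "continuous_on UNIV (\<lambda>(x, y). K x y) \<Longrightarrow> continuous_on UNIV (\<lambda>x. (K x y :: real))"
proof -
  assume a: "continuous_on UNIV (\<lambda>(x, y). K x y)"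
  have "continuous_on UNIV ((\<lambda>(x, y). K x y) \<circ> (\<lambda>x. (x, y)))"
    by (rule continuous_on_compose[OF _ continuous_on_subset[OF a]]) (auto intro!: continuous_intros)
  then show ?thesis by (simp add: o_def)
qed

lemma cont_snd: "continuous_on UNIV (\<lambda>(x, y). K x y) \<Longrightarrow> continuous_on UNIV (\<lambda>y. (K x y :: real))"
proof -
  assume a: "continuous_on UNIV (\<lambda>(x, y). K x y)"
  have "continuous_on UNIV ((\<lambda>(x, y). K x y) \<circ> (\<lambda>y. (x, y)))"
    by (rule continuous_on_compose[OF _ continuous_on_subset[OF a]]) (auto intro!: continuous_intros)
  then show ?thesis by (simp add: o_def)
qed

lemma kembed_cont:
  fixes K :: "'a::metric_space \<Rightarrow> 'a \<Rightarrow> real"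
  assumes cpt: "compact (UNIV::'a::metric_space set)" and s: "\<sigma> \<in> Mplus"
    and K: "continuous_on UNIV (\<lambda>(x, y). K x y)"
  shows "continuous_on UNIV (\<lambda>y. \<integral>x. (K x y :: real) \<partial>\<sigma>)"
proof -
  interpret finite_measure \<sigma> using Mplus_fin[OF s] .
  have cpt2: "compact (UNIV :: ('a \<times> 'a) set)"
    using compact_Times[OF cpt cpt] by simp
  obtain B where B: "\<And>p. \<bar>(\<lambda>(x, y). K x y) p\<bar> \<le> B"
    using cont_bounded[OF cpt2 K] by metis
  show ?thesis unfolding continuous_on_sequentially
  proof (intro allI ballI impI, elim conjE)
    fix ys :: "nat \<Rightarrow> 'a" and a
    assume lim: "ys \<longlonglongrightarrow> a"
    have "(\<lambda>i. \<integral>x. K x (ys i) \<partial>\<sigma>) \<longlonglongrightarrow> (\<integral>x. K x a \<partial>\<sigma>)"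
    proof (rule integral_dominated_convergence[where w="\<lambda>_. B"])
      show "(\<lambda>x. K x a) \<in> borel_measurable \<sigma>" by (rule Mplus_meas[OF s cont_fst[OF K]])
      show "(\<lambda>x. K x (ys i)) \<in> borel_measurable \<sigma>" for i by (rule Mplus_meas[OF s cont_fst[OF K]])
      show "integrable \<sigma> (\<lambda>_. B)" by simp
      show "AE x in \<sigma>. (\<lambda>i. K x (ys i)) \<longlonglongrightarrow> K x a"
      proof (rule AE_I2)
        fix x
        have "isCont (\<lambda>y. K x y) a" using cont_snd[OF K, of x]
          by (simp add: continuous_on_eq_continuous_at)
        then show "(\<lambda>i. K x (ys i)) \<longlonglongrightarrow> K x a"
          using lim by (rule isCont_tendsto_compose)
      qed
      show "AE x in \<sigma>. norm (K x (ys i)) \<le> B" for i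
      proof (rule AE_I2)
        fix x show "norm (K x (ys i)) \<le> B" using B[of "(x, ys i)"] by simp
      qed
    qed
    then show "((\<lambda>y. \<integral>x. K x y \<partial>\<sigma>) \<circ> ys) \<longlonglongrightarrow> (\<integral>x. K x a \<partial>\<sigma>)"
      by (simp add: o_def)
  qed
qed



lemma sum_kernel_int:
  fixes K :: "'a::metric_space \<Rightarrow> 'a \<Rightarrow> real"
  assumes cpt: "compact (UNIV::'a set)" and s: "\<sigma> \<in> Mplus"
    and K: "continuous_on UNIV (\<lambda>(x, y). K x y)" and sym: "\<And>x y. K x y = K y x"
  shows "(\<integral>y. (\<Sum>i<n. a i * K (xs i) y) \<partial>\<sigma>) = (\<Sum>i<n. a i * kembed K \<sigma> (xs i))"
proof -
  have "(\<integral>y. (\<Sum>i<n. a i * K (xs i) y) \<partial>\<sigma>) = (\<Sum>i<n. \<integral>y. a i * K (xs i) y \<partial>\<sigma>)"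
    using Bochner_Integration.integral_sum[of "{..<n}" \<sigma> "\<lambda>i y. a i * K (xs i) y"]
      Mplus_int[OF cpt s cont_snd[OF K]] by simp
  also have "\<dots> = (\<Sum>i<n. a i * kembed K \<sigma> (xs i))"
  proof (intro sum.cong refl)
    fix i
    have kk: "kembed K \<sigma> z = (\<integral>y. K z y \<partial>\<sigma>)" for z
    proof -
      have "(\<lambda>x. K x z) = K z" by (rule ext) (rule sym)
      then show ?thesis unfolding kembed_def by simp
    qed
    show "(\<integral>y. a i * K (xs i) y \<partial>\<sigma>) = a i * kembed K \<sigma> (xs i)"
      by (simp add: kk)
  qed
  finally show ?thesis .
qed

lemma int_eq_cont:
  fixes K :: "'a::metric_space \<Rightarrow> 'a \<Rightarrow> real"
  assumes cpt: "compact (UNIV::'a set)" and s1: "\<sigma>1 \<in> Mplus" and s2: "\<sigma>2 \<in> Mplus"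
    and K: "continuous_on UNIV (\<lambda>(x, y). K x y)" and sym: "\<And>x y. K x y = K y x"
    and U: "universal_kernel K" and eq: "kembed K \<sigma>1 = kembed K \<sigma>2"
    and f: "continuous_on UNIV (f :: 'a \<Rightarrow> real)"
  shows "(\<integral>x. f x \<partial>\<sigma>1) = (\<integral>x. f x \<partial>\<sigma>2)"
proof -
  let ?M = "measure \<sigma>1 UNIV + measure \<sigma>2 UNIV + 1"
  have Mpos: "?M > 0" by (simp add: add_nonneg_pos)
  have key: "\<bar>(\<integral>x. f x \<partial>\<sigma>1) - (\<integral>x. f x \<partial>\<sigma>2)\<bar> \<le> d" if d: "d > 0" for d
  proof -
    define e where "e = d / ?M"
    have e: "e > 0" using d Mpos by (simp add: e_def)
    have "\<exists>(n::nat) (xs::nat \<Rightarrow> 'a) (a::nat \<Rightarrow> real). \<forall>y. \<bar>f y - (\<Sum>i<n. a i * K (xs i) y)\<bar> < e"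
      using U f e unfolding universal_kernel_def by blast
    then obtain n :: nat and xs :: "nat \<Rightarrow> 'a" and a :: "nat \<Rightarrow> real" where app: "\<And>y. \<bar>f y - (\<Sum>i<n. a i * K (xs i) y)\<bar> < e"
      by blast
    let ?S = "\<lambda>y. (\<Sum>i<n. a i * K (xs i) y)"
    have Sc: "continuous_on UNIV ?S"
      by (intro continuous_intros continuous_on_mult_left cont_snd[OF K])
    have b: "\<bar>(\<integral>x. f x \<partial>\<sigma>) - (\<integral>x. ?S x \<partial>\<sigma>)\<bar> \<le> e * measure \<sigma> UNIV" if s: "\<sigma> \<in> Mplus" for \<sigma>
    proof -
      have "(\<integral>x. f x \<partial>\<sigma>) - (\<integral>x. ?S x \<partial>\<sigma>) = (\<integral>x. f x - ?S x \<partial>\<sigma>)"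
        by (rule Bochner_Integration.integral_diff[symmetric]) (rule Mplus_int[OF cpt s f], rule Mplus_int[OF cpt s Sc])
      also have "\<bar>\<dots>\<bar> \<le> e * measure \<sigma> UNIV"
        by (rule Mplus_int_bound[OF cpt s]) (intro continuous_on_diff f Sc, use app less_imp_le in blast)
      finally show ?thesis .
    qed
    have same: "(\<integral>x. ?S x \<partial>\<sigma>1) = (\<integral>x. ?S x \<partial>\<sigma>2)"
      using sum_kernel_int[OF cpt s1 K sym, where n=n and a=a and xs=xs]
        sum_kernel_int[OF cpt s2 K sym, where n=n and a=a and xs=xs] eq by simp
    have "\<bar>(\<integral>x. f x \<partial>\<sigma>1) - (\<integral>x. f x \<partial>\<sigma>2)\<bar> \<le> e * measure \<sigma>1 UNIV + e * measure \<sigma>2 UNIV"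
      using b[OF s1] b[OF s2] same by linarith
    also have "\<dots> \<le> e * ?M" using e by (simp add: algebra_simps)
    also have "\<dots> = d" using Mpos by (simp add: e_def)
    finally show ?thesis .
  qed
  then show ?thesis
  proof -
    have "\<bar>(\<integral>x. f x \<partial>\<sigma>1) - (\<integral>x. f x \<partial>\<sigma>2)\<bar> \<le> 0"
      by (rule field_le_epsilon) (use key in simp)
    then show ?thesis by simp
  qed
qed



lemma closed_meas_eq:
  fixes \<sigma>1 \<sigma>2 :: "'a::metric_space measure"
  assumes cpt: "compact (UNIV::'a set)" and s1: "\<sigma>1 \<in> Mplus" and s2: "\<sigma>2 \<in> Mplus"
    and eq: "\<And>f. continuous_on UNIV (f :: 'a \<Rightarrow> real) \<Longrightarrow> (\<integral>x. f x \<partial>\<sigma>1) = (\<integral>x. f x \<partial>\<sigma>2)"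
    and F: "closed F" "F \<noteq> {}"
  shows "measure \<sigma>1 F = measure \<sigma>2 F"
proof -
  define g where "g n x = max 0 (1 - real n * infdist x F)" for n x
  have gc: "continuous_on UNIV (g n)" for n
    unfolding g_def by (intro continuous_intros)
  have lim: "(\<lambda>n. g n x) \<longlonglongrightarrow> indicator F x" for x
  proof (cases "x \<in> F")
    case True
    then have "infdist x F = 0" using F in_closed_iff_infdist_zero by blast
    then show ?thesis using True by (simp add: g_def)
  next
    case False
    then have d: "infdist x F > 0" using F infdist_pos_not_in_closed by blast
    obtain N :: nat where N: "1 / infdist x F < real N" using reals_Archimedean2 by blast
    have "eventually (\<lambda>n. g n x = indicator F x) sequentially"
      unfolding eventually_sequentially
    proof (intro exI allI impI)
      fix n assume "N \<le> n"
      then have "1 / infdist x F < real n" using N by linarith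
      then have "1 < real n * infdist x F" using d by (simp add: field_simps)
      then show "g n x = indicator F x" using False by (simp add: g_def)
    qed
    then show ?thesis by (rule tendsto_eventually)
  qed
  have conv: "(\<lambda>n. \<integral>x. g n x \<partial>\<sigma>) \<longlonglongrightarrow> measure \<sigma> F" if s: "\<sigma> \<in> Mplus" for \<sigma>
  proof -
    interpret finite_measure \<sigma> using Mplus_fin[OF s] .
    have Fm: "F \<in> sets \<sigma>" using Mplus_sets[OF s] F by simp
    have "(\<lambda>n. \<integral>x. g n x \<partial>\<sigma>) \<longlonglongrightarrow> (\<integral>x. indicator F x \<partial>\<sigma>)"
    proof (rule integral_dominated_convergence[where w="\<lambda>_. 1"])
      show "(\<lambda>x. indicator F x :: real) \<in> borel_measurable \<sigma>" using Fm by simp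
      show "(g n) \<in> borel_measurable \<sigma>" for n by (rule Mplus_meas[OF s gc])
      show "integrable \<sigma> (\<lambda>_. 1::real)" by simp
      show "AE x in \<sigma>. (\<lambda>n. g n x) \<longlonglongrightarrow> indicator F x" using lim by simp
      show "AE x in \<sigma>. norm (g n x) \<le> 1" for n
        by (rule AE_I2) (simp add: g_def infdist_nonneg)
    qed
    then show ?thesis using Mplus_space[OF s] by simp
  qed
  have "(\<lambda>n. \<integral>x. g n x \<partial>\<sigma>1) = (\<lambda>n. \<integral>x. g n x \<partial>\<sigma>2)"
    using eq gc by simp
  then show ?thesis using conv[OF s1] conv[OF s2] LIMSEQ_unique by metis
qed

lemma meas_eq_cont:
  fixes \<sigma>1 \<sigma>2 :: "'a::metric_space measure"
  assumes cpt: "compact (UNIV::'a set)" and s1: "\<sigma>1 \<in> Mplus" and s2: "\<sigma>2 \<in> Mplus"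
    and eq: "\<And>f. continuous_on UNIV (f :: 'a \<Rightarrow> real) \<Longrightarrow> (\<integral>x. f x \<partial>\<sigma>1) = (\<integral>x. f x \<partial>\<sigma>2)"
  shows "\<sigma>1 = \<sigma>2"
proof -
  interpret f1: finite_measure \<sigma>1 using Mplus_fin[OF s1] .
  interpret f2: finite_measure \<sigma>2 using Mplus_fin[OF s2] .
  have sb: "sets (borel :: 'a measure) = sigma_sets UNIV (Collect closed)"
    by (subst borel_eq_closed) (simp add: sets_measure_of)
  show ?thesis
  proof (rule measure_eqI_generator_eq[where \<Omega>=UNIV and E="Collect closed" and A="\<lambda>_. UNIV"])
    show "Int_stable (Collect closed :: 'a set set)" by (auto simp: Int_stable_def)
    show "Collect closed \<subseteq> Pow (UNIV :: 'a set)" by simp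
    show "sets \<sigma>1 = sigma_sets UNIV (Collect closed)" using Mplus_sets[OF s1] sb by simp
    show "sets \<sigma>2 = sigma_sets UNIV (Collect closed)" using Mplus_sets[OF s2] sb by simp
    show "range (\<lambda>_. UNIV) \<subseteq> Collect (closed :: 'a set \<Rightarrow> bool)" by auto
    show "(\<Union>i::nat. UNIV) = (UNIV :: 'a set)" by simp
    show "emeasure \<sigma>1 UNIV \<noteq> \<infinity>" for i :: nat
      by (simp add: f1.emeasure_eq_measure)
    fix X :: "'a set" assume "X \<in> Collect closed"
    then have X: "closed X" by simp
    show "emeasure \<sigma>1 X = emeasure \<sigma>2 X"
    proof (cases "X = {}")
      case True then show ?thesis by simp
    next
      case False
      have "measure \<sigma>1 X = measure \<sigma>2 X" by (rule closed_meas_eq[OF cpt s1 s2 eq X False])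
      then show ?thesis by (simp add: f1.emeasure_eq_measure f2.emeasure_eq_measure)
    qed
  qed
qed



lemma AE_False_space: "(AE x in M. False) \<Longrightarrow> emeasure M (space M) = 0"
  using ae_filter_eq_bot_iff eventually_False by blast

theorem mainTheorem16:
  fixes eps :: real and c :: "'a::metric_space \<Rightarrow> 'a \<Rightarrow> real" and V :: "'a \<Rightarrow> real"
    and b :: "'a \<Rightarrow> real"
  assumes "compact (UNIV :: 'a set)"
    and "eps > 0"
    and "continuous_on UNIV (\<lambda>(x, y). c x y)"
    and "\<forall>x y. c x y = c y x"
    and "\<forall>x y. c x y \<ge> 0"
    and "pd_kernel (kc eps c)"
    and "universal_kernel (kc eps c)"
    and "continuous_on UNIV V"
    and "b \<in> Bset (kc eps c)"
  shows "(\<exists>p\<in>Ptilde (kc eps c) b. \<forall>y. Wop eps (kc eps c) V b y + p y = 0)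
     \<longleftrightarrow> emeasure (Binv (kc eps c) b) (UNIV - argmin_set V) = 0"
proof -
  note cpt = assms(1)
  define k where "k = kc eps c"
  have kpos: "k x y > 0" for x y by (simp add: k_def kc_def)
  have ksym: "k x y = k y x" for x y using assms(4) by (simp add: k_def kc_def)
  have Kc: "continuous_on UNIV (\<lambda>(x, y). k x y)"
  proof -
    have e: "(\<lambda>(x, y). k x y) = (\<lambda>p. exp (- (\<lambda>(x, y). c x y) p / eps))"
      by (auto simp: k_def kc_def fun_eq_iff)
    show ?thesis unfolding e using assms(2) by (intro continuous_intros assms(3)) auto
  qed
  have U: "universal_kernel k" using assms(7) by (simp add: k_def)
  obtain \<sigma> where s: "\<sigma> \<in> Mplus" and bdef: "b = kembed k \<sigma>" and nrm: "sqrt (rkhs_norm_sq k \<sigma>) = 1"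
    using assms(9) unfolding Bset_def k_def by blast
  interpret finite_measure \<sigma> using Mplus_fin[OF s] .
  have sp: "space \<sigma> = UNIV" by (rule Mplus_space[OF s])
  have H: "Hinv k b = \<sigma>"
    unfolding Hinv_def
  proof (rule the_equality)
    show "\<sigma> \<in> Mplus \<and> kembed k \<sigma> = b" using s bdef by simp
    fix \<tau> assume t: "\<tau> \<in> Mplus \<and> kembed k \<tau> = b"
    show "\<tau> = \<sigma>"
    proof (rule meas_eq_cont[OF cpt])
      show "\<tau> \<in> Mplus" "\<sigma> \<in> Mplus" using t s by auto
      fix f :: "'a \<Rightarrow> real" assume "continuous_on UNIV f"
      then show "(\<integral>x. f x \<partial>\<tau>) = (\<integral>x. f x \<partial>\<sigma>)"
        using int_eq_cont[OF cpt _ s Kc ksym U, of \<tau> f] t bdef by simp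
    qed
  qed
  have bc: "continuous_on UNIV b" unfolding bdef kembed_def by (rule kembed_cont[OF cpt s Kc])
  have nz: "emeasure \<sigma> UNIV \<noteq> 0"
  proof
    assume z: "emeasure \<sigma> UNIV = 0"
    have "rkhs_norm_sq k \<sigma> = 0" unfolding rkhs_norm_sq_def
      by (rule integral_eq_zero_AE, rule emeasure_0_AE) (use z sp in simp)
    then show False using nrm by simp
  qed
  have bpos: "b y > 0" for y
  proof -
    have i: "integrable \<sigma> (\<lambda>x. k x y)" by (rule Mplus_int[OF cpt s cont_fst[OF Kc]])
    have ge: "b y \<ge> 0" unfolding bdef kembed_def
      by (rule integral_nonneg_AE, rule AE_I2) (simp add: less_imp_le[OF kpos])
    have "b y \<noteq> 0"
    proof
      assume "b y = 0"
      then have "AE x in \<sigma>. k x y = 0"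
      proof -
        have "AE x in \<sigma>. 0 \<le> k x y" by (rule AE_I2) (simp add: less_imp_le[OF kpos])
        then show ?thesis using integral_nonneg_eq_0_iff_AE[OF i] \<open>b y = 0\<close>
          unfolding bdef kembed_def by simp
      qed
      then have "AE x in \<sigma>. False" by (rule eventually_mono) (metis kpos less_irrefl)
      then have "emeasure \<sigma> (space \<sigma>) = 0" by (rule AE_False_space)
      then show False using nz sp by simp
    qed
    then show ?thesis using ge by simp
  qed
  obtain y0 where y0: "\<And>y. V y0 \<le> V y"
    using continuous_attains_inf[OF cpt _ assms(8)] by auto
  define m where "m = V y0"
  have Vm: "V y \<ge> m" for y using y0 m_def by simp
  have Sdef: "UNIV - argmin_set V = {x. m < V x}"
  proof -
    have "argmin_set V = {x. V x \<le> m}" unfolding argmin_set_def m_def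
      using y0 order_trans by blast
    then show ?thesis using Vm by auto
  qed
  have Sopen: "open {x. m < V x}"
    by (rule open_Collect_less[OF continuous_on_const assms(8)])
  have Smeas: "{x. m < V x} \<in> sets \<sigma>" using Mplus_sets[OF s] Sopen by simp
  have bmeas: "b \<in> borel_measurable \<sigma>" by (rule Mplus_meas[OF s bc])
  have Vmeas: "V \<in> borel_measurable \<sigma>" by (rule Mplus_meas[OF s assms(8)])
  have RHS: "emeasure (Binv k b) (UNIV - argmin_set V) = 0 \<longleftrightarrow> (AE x in \<sigma>. V x = m)"
  proof -
    have "emeasure (Binv k b) (UNIV - argmin_set V)
        = (\<integral>\<^sup>+ x. ennreal (b x) * indicator {x. m < V x} x \<partial>\<sigma>)"
      unfolding Binv_def H Sdef
      by (rule emeasure_density) (use bmeas Smeas in auto)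
    also have "\<dots> = 0 \<longleftrightarrow> (AE x in \<sigma>. ennreal (b x) * indicator {x. m < V x} x = 0)"
      by (rule nn_integral_0_iff_AE) (use bmeas Smeas in auto)
    also have "(\<lambda>x. ennreal (b x) * indicator {x. m < V x} x = 0) = (\<lambda>x. V x = m)"
    proof
      fix x
      show "(ennreal (b x) * indicator {x. m < V x} x = 0) = (V x = m)"
        using Vm[of x] bpos[of x] by (cases "m < V x") auto
    qed
    finally show ?thesis .
  qed
  have Vs: "Vstar k V b y = (\<integral>x. k x y * V x \<partial>\<sigma>)" for y
    unfolding Vstar_def H ..
  show ?thesis
    unfolding k_def[symmetric] RHS
  proof
    assume "\<exists>p\<in>Ptilde k b. \<forall>y. Wop eps k V b y + p y = 0"
    then obtain p where p: "p \<in> Ptilde k b" and W: "\<And>y. Wop eps k V b y + p y = 0" by blast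
    have "p y0 \<le> 0" using p unfolding Ptilde_def by blast
    then have "Wop eps k V b y0 \<ge> 0" using W[of y0] by linarith
    then have "V y0 * b y0 - Vstar k V b y0 \<ge> 0"
    proof -
      have "0 \<le> 2 / eps * (V y0 * b y0 - Vstar k V b y0)" using \<open>Wop eps k V b y0 \<ge> 0\<close>
        unfolding Wop_def by simp
      moreover have "2 / eps > 0" using assms(2) by simp
      ultimately show ?thesis
        using mult_pos_neg[of "2/eps" "V y0 * b y0 - Vstar k V b y0"] by linarith
    qed
    then have le: "(\<integral>x. k x y0 * V x \<partial>\<sigma>) - m * b y0 \<le> 0" unfolding Vs m_def by simp
    have i1: "integrable \<sigma> (\<lambda>x. k x y0 * V x)"
      by (rule Mplus_int[OF cpt s continuous_on_mult[OF cont_fst[OF Kc] assms(8)]])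
    have i2: "integrable \<sigma> (\<lambda>x. k x y0 * m)"
      by (rule Mplus_int[OF cpt s continuous_on_mult[OF cont_fst[OF Kc] continuous_on_const]])
    have i3: "integrable \<sigma> (\<lambda>x. k x y0 * (V x - m))"
      by (rule Mplus_int[OF cpt s continuous_on_mult[OF cont_fst[OF Kc]
            continuous_on_diff[OF assms(8) continuous_on_const]]])
    have "(\<integral>x. k x y0 * (V x - m) \<partial>\<sigma>) = (\<integral>x. k x y0 * V x - k x y0 * m \<partial>\<sigma>)"
      by (simp add: algebra_simps)
    also have "\<dots> = (\<integral>x. k x y0 * V x \<partial>\<sigma>) - (\<integral>x. k x y0 * m \<partial>\<sigma>)"
      by (rule Bochner_Integration.integral_diff[OF i1 i2])
    also have "(\<integral>x. k x y0 * m \<partial>\<sigma>) = m * b y0"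
      unfolding bdef kembed_def by simp
    finally have "(\<integral>x. k x y0 * (V x - m) \<partial>\<sigma>) \<le> 0" using le by simp
    moreover have nn: "AE x in \<sigma>. 0 \<le> k x y0 * (V x - m)"
      by (rule AE_I2) (simp add: Vm less_imp_le[OF kpos])
    moreover have "(\<integral>x. k x y0 * (V x - m) \<partial>\<sigma>) \<ge> 0"
      by (rule integral_nonneg_AE[OF nn])
    ultimately have "(\<integral>x. k x y0 * (V x - m) \<partial>\<sigma>) = 0" by linarith
    then have "AE x in \<sigma>. k x y0 * (V x - m) = 0"
      using integral_nonneg_eq_0_iff_AE[OF i3 nn] by simp
    then show "AE x in \<sigma>. V x = m"
      by (rule eventually_mono) (use kpos in \<open>auto simp: less_le\<close>)
  next
    assume ae: "AE x in \<sigma>. V x = m"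
    have Vs2: "Vstar k V b y = m * b y" for y
    proof -
      have "(\<integral>x. k x y * V x \<partial>\<sigma>) = (\<integral>x. k x y * m \<partial>\<sigma>)"
      proof (rule integral_cong_AE)
        show "(\<lambda>x. k x y * V x) \<in> borel_measurable \<sigma>"
          by (rule Mplus_meas[OF s continuous_on_mult[OF cont_fst[OF Kc] assms(8)]])
        show "(\<lambda>x. k x y * m) \<in> borel_measurable \<sigma>"
          by (rule Mplus_meas[OF s continuous_on_mult[OF cont_fst[OF Kc] continuous_on_const]])
        show "AE x in \<sigma>. k x y * V x = k x y * m" using ae by (rule eventually_mono) simp
      qed
      moreover have "(\<integral>x. k x y * m \<partial>\<sigma>) = m * b y" by (simp add: bdef kembed_def)
      ultimately show ?thesis using Vs[of y] by simp
    qed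
    have Wf: "Wop eps k V b = (\<lambda>y. 2 / eps * (V y * b y - m * b y))"
      unfolding Wop_def Vs2 ..
    have null: "emeasure \<sigma> {x. m < V x} = 0"
    proof -
      have "{x \<in> space \<sigma>. \<not> V x = m} = {x. m < V x}" using Vm sp by (auto simp: less_le)
      then show ?thesis using AE_iff_measurable[OF Smeas, of "\<lambda>x. V x = m"] ae by simp
    qed
    let ?p = "\<lambda>y. - (2 / eps * (V y * b y - m * b y))"
    show "\<exists>p\<in>Ptilde k b. \<forall>y. Wop eps k V b y + p y = 0"
    proof (rule bexI[of _ ?p])
      show "\<forall>y. Wop eps k V b y + ?p y = 0" unfolding Wf by simp
      show "?p \<in> Ptilde k b" unfolding Ptilde_def H
      proof (intro CollectI conjI allI ballI)
        show "continuous_on UNIV ?p" by (intro continuous_intros assms(8) bc)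
        fix x
        have "0 \<le> 2 / eps * (V x * b x - m * b x)"
        proof -
          have "V x * b x - m * b x = (V x - m) * b x" by (simp add: algebra_simps)
          moreover have "0 \<le> (V x - m) * b x"
            using Vm[of x] bpos[of x] by (intro mult_nonneg_nonneg) auto
          moreover have "0 \<le> 2 / eps" using assms(2) by simp
          ultimately show ?thesis by (metis mult_nonneg_nonneg)
        qed
        then show "?p x \<le> 0" by simp
      next
        fix x assume xs: "x \<in> msupp \<sigma>"
        have "V x = m"
        proof (rule ccontr)
          assume "V x \<noteq> m"
          then have "x \<in> {x. m < V x}" using Vm[of x] by simp
          then obtain e where e: "e > 0" "ball x e \<subseteq> {x. m < V x}"
            using Sopen unfolding open_contains_ball by blast
          have "emeasure \<sigma> (ball x e) \<le> emeasure \<sigma> {x. m < V x}"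
            by (rule emeasure_mono[OF e(2) Smeas])
          then have "emeasure \<sigma> (ball x e) = 0" using null by simp
          then show False using xs e(1) unfolding msupp_def by auto
        qed
        then show "?p x = 0" by simp
      qed
    qed
  qed
qed

end
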